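(* Let $n\ge0$ and let $H_n$ be the pyrene system with $n$ pyrene fragments. Then the sum of the anti-forcing numbers of all perfect matchings of $H_n$ is $$\sum_{M}af(H_n,M)=\frac{3\sqrt{2}}{64}(3-2\sqrt{2})^n+\frac{17-12\sqrt{2}}{16}n(3-2\sqrt{2})^n-\frac{3\sqrt{2}}{64}(3+2\sqrt{2})^n+\frac{17+12\sqrt{2}}{16}n(3+2\sqrt{2})^n.$$
   Context: Pyrene system: draw the hexagonal lattice so that every hexagon has two vertical sides; horizontally adjacent hexagons then share a vertical edge. For $n\ge1$, $H_n$ is the hexagonal system (the plane graph formed by the vertices and edges of the following $4n$ hexagons) consisting of a horizontal linear row of $2n$ hexagons $h_{1,1},h_{1,2},\dots,h_{n,1},h_{n,2}$, consecutive ones sharing a vertical edge, together with, for each $i$, a hexagon $s_{i,1}$ directly above and a hexagon $s_{i,2}$ directly below the common edge of $h_{i,1}$ and $h_{i,2}$ (each sharing an edge with both $h_{i,1}$ and $h_{i,2}$). $H_0$ is the null graph, which has one (empty) perfect matching with anti-forcing number $0$. For a perfect matching $M$ of $G$, an anti-forcing set of $M$ is a set $S\subseteq E(G)\setminus M$ such that $M$ is the unique perfect matching of $G-S$; the anti-forcing number $af(G,M)$ is the minimum size of an anti-forcing set of $M$. The sum is over all perfect matchings $M$ of $H_n$ (equivalently, it is $\frac{d}{dx}Af(H_n,x)|_{x=1}$ with $Af(G,x)=\sum_M x^{af(G,M)}$). *)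

theory Defs
  imports Complex_Main
begin

text \<open>A hexagon with two
vertical sides and centre (x,y) has vertices (x,y+2),(x+1,y+1),(x+1,y-1),(x,y-2),
(x-1,y-1),(x-1,y+1) (vertical coordinate rescaled). Horizontally adjacent hexagons
have centres differing by (2,0); the hexagon directly above (below) the common
vertical edge of hexagons centred at (x,0),(x+2,0) is centred at (x+1,3) ((x+1,-3)).\<close>

type_synonym vert = "int \<times> int"

definition hex_verts :: "int \<times> int \<Rightarrow> vert set" where
  "hex_verts c = (case c of (x,y) \<Rightarrow>
     {(x,y+2),(x+1,y+1),(x+1,y-1),(x,y-2),(x-1,y-1),(x-1,y+1)})"

definition hex_edges :: "int \<times> int \<Rightarrow> vert set set" where
  "hex_edges c = (case c of (x,y) \<Rightarrow>
     {{(x,y+2),(x+1,y+1)}, {(x+1,y+1),(x+1,y-1)}, {(x+1,y-1),(x,y-2)},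
      {(x,y-2),(x-1,y-1)}, {(x-1,y-1),(x-1,y+1)}, {(x-1,y+1),(x,y+2)}})"

text \<open>Centres of the 4n hexagons of the pyrene system H_n:
 h_{i,1}, h_{i,2} at (4(i-1),0), (4(i-1)+2,0); s_{i,1} at (4(i-1)+1,3); s_{i,2} at (4(i-1)+1,-3).\<close>
definition pyrene_hexes :: "nat \<Rightarrow> (int \<times> int) set" where
  "pyrene_hexes n = {(int (2*k), 0) | k. k < 2*n}
                  \<union> {(int (4*i) + 1, 3) | i. i < n}
                  \<union> {(int (4*i) + 1, -3) | i. i < n}"

definition pyrene_V :: "nat \<Rightarrow> vert set" where
  "pyrene_V n = (\<Union>c\<in>pyrene_hexes n. hex_verts c)"

definition pyrene_E :: "nat \<Rightarrow> vert set set" where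
  "pyrene_E n = (\<Union>c\<in>pyrene_hexes n. hex_edges c)"

text \<open>Graphs are given by a vertex set V and a set E of 2-element edges.\<close>
definition perfect_matching :: "'a set \<Rightarrow> 'a set set \<Rightarrow> 'a set set \<Rightarrow> bool" where
  "perfect_matching V E M \<longleftrightarrow> M \<subseteq> E \<and> (\<forall>v\<in>V. \<exists>!e. e \<in> M \<and> v \<in> e)"

definition anti_forcing_set :: "'a set \<Rightarrow> 'a set set \<Rightarrow> 'a set set \<Rightarrow> 'a set set \<Rightarrow> bool" where
  "anti_forcing_set V E M S \<longleftrightarrow> S \<subseteq> E - M \<and>
     (\<forall>M'. perfect_matching V (E - S) M' \<longleftrightarrow> M' = M)"

definition anti_forcing_number :: "'a set \<Rightarrow> 'a set set \<Rightarrow> 'a set set \<Rightarrow> nat" where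
  "anti_forcing_number V E M = (LEAST k. \<exists>S. anti_forcing_set V E M S \<and> card S = k)"

end

theory Submission
  imports Defs
begin


datatype kd = KL | KA | KM | KB | K1 | K2 | K3

type_synonym vn = "nat \<times> kd \<times> bool"

fun xo :: "kd \<Rightarrow> int" where
 "xo KL = -1" | "xo KA = 0" | "xo KM = 1" | "xo KB = 2" | "xo K1 = 0" | "xo K2 = 1" | "xo K3 = 2"
fun yo :: "kd \<Rightarrow> int" where
 "yo KL = 1" | "yo KA = 2" | "yo KM = 1" | "yo KB = 2" | "yo K1 = 4" | "yo K2 = 5" | "yo K3 = 4"

definition phi :: "vn \<Rightarrow> vert" where
 "phi a = (case a of (k,d,s) \<Rightarrow> (4 * int k + xo d, if s then yo d else - yo d))"

lemma phi_eq[simp]: "phi a = phi b \<longleftrightarrow> a = b"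
proof
  assume h: "phi a = phi b"
  obtain k d s where a: "a = (k,d,s)" by (cases a) auto
  obtain k' d' s' where b: "b = (k',d',s')" by (cases b) auto
  show "a = b" using h unfolding a b phi_def
    by (cases d; cases d'; cases s; cases s'; simp; presburger)
qed simp

datatype ek = ELA | EAM | EMB | EBR | EA1 | E12 | E23 | E3B
datatype ed = Sd nat bool ek | MR nat | LR nat

fun ends :: "ed \<Rightarrow> vn \<times> vn" where
 "ends (Sd k s ELA) = ((k,KL,s),(k,KA,s))"
|"ends (Sd k s EAM) = ((k,KA,s),(k,KM,s))"
|"ends (Sd k s EMB) = ((k,KM,s),(k,KB,s))"
|"ends (Sd k s EBR) = ((k,KB,s),(Suc k,KL,s))"
|"ends (Sd k s EA1) = ((k,KA,s),(k,K1,s))"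
|"ends (Sd k s E12) = ((k,K1,s),(k,K2,s))"
|"ends (Sd k s E23) = ((k,K2,s),(k,K3,s))"
|"ends (Sd k s E3B) = ((k,K3,s),(k,KB,s))"
|"ends (MR k) = ((k,KM,True),(k,KM,False))"
|"ends (LR k) = ((k,KL,True),(k,KL,False))"

definition inc :: "vn \<Rightarrow> ed \<Rightarrow> bool" where
 "inc a d \<longleftrightarrow> a = fst (ends d) \<or> a = snd (ends d)"

definition edge_of :: "ed \<Rightarrow> vert set" where
 "edge_of d = {phi (fst (ends d)), phi (snd (ends d))}"

lemma ends_ne: "fst (ends d) \<noteq> snd (ends d)"
  by (cases d rule: ends.cases) auto

lemma edge_of_inj[simp]: "edge_of d = edge_of d' \<longleftrightarrow> d = d'"
  by (cases d rule: ends.cases; cases d' rule: ends.cases; auto simp: edge_of_def doubleton_eq_iff)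

lemma inj_edge_of: "inj edge_of" by (rule injI) simp

lemma phi_in_edge: "phi a \<in> edge_of d \<longleftrightarrow> inc a d"
  unfolding edge_of_def inc_def by auto

definition VN :: "nat \<Rightarrow> vn set" where
 "VN n = {(k,d,s). if d = KL then k \<le> n \<and> 0 < n else k < n}"

definition ED :: "nat \<Rightarrow> ed set" where
 "ED n = {d. case d of Sd k s e \<Rightarrow> k < n | MR k \<Rightarrow> k < n | LR k \<Rightarrow> k \<le> n \<and> 0 < n}"

lemma hexes_eq: "pyrene_hexes n = (\<Union>k<n. {(4*int k, 0), (4*int k + 2, 0), (4*int k+1, 3), (4*int k+1, -3)})"
proof -
  have a: "{(int (2*j), 0::int) | j. j < 2*n} = (\<Union>k<n. {(4*int k, 0), (4*int k + 2, 0)})"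
  proof (rule set_eqI, rule iffI)
    fix x assume "x \<in> {(int (2*j), 0::int) | j. j < 2*n}"
    then obtain j where j: "x = (int (2*j), 0)" "j < 2*n" by auto
    show "x \<in> (\<Union>k<n. {(4*int k, 0), (4*int k + 2, 0)})"
    proof (cases "even j")
      case True then obtain k where "j = 2*k" by auto
      then show ?thesis using j by auto
    next
      case False then obtain k where "j = 2*k+1" using oddE by blast
      then show ?thesis using j by auto
    qed
  next
    fix x assume "x \<in> (\<Union>k<n. {(4*int k, 0::int), (4*int k + 2, 0)})"
    then obtain k where k: "k < n" "x = (4*int k, 0) \<or> x = (4*int k + 2, 0)" by auto
    from k(2) show "x \<in> {(int (2*j), 0::int) | j. j < 2*n}"
    proof
      assume "x = (4*int k, 0)" then show ?thesis using k(1) by (intro CollectI exI[of _ "2*k"]) auto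
    next
      assume "x = (4*int k+2, 0)" then show ?thesis using k(1) by (intro CollectI exI[of _ "2*k+1"]) auto
    qed
  qed
  show ?thesis unfolding pyrene_hexes_def a by auto
qed

lemma hv1: "hex_verts (4*int k, 0) = phi ` {(k,KA,True),(k,KM,True),(k,KM,False),(k,KA,False),(k,KL,False),(k,KL,True)}"
  by (simp add: hex_verts_def phi_def algebra_simps)
lemma hv2: "hex_verts (4*int k+2, 0) = phi ` {(k,KB,True),(Suc k,KL,True),(Suc k,KL,False),(k,KB,False),(k,KM,False),(k,KM,True)}"
  by (simp add: hex_verts_def phi_def algebra_simps)
lemma hv3: "hex_verts (4*int k+1, 3) = phi ` {(k,K2,True),(k,K3,True),(k,KB,True),(k,KM,True),(k,KA,True),(k,K1,True)}"
  by (simp add: hex_verts_def phi_def algebra_simps)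
lemma hv4: "hex_verts (4*int k+1, -3) = phi ` {(k,KM,False),(k,KB,False),(k,K3,False),(k,K2,False),(k,K1,False),(k,KA,False)}"
  by (simp add: hex_verts_def phi_def algebra_simps)

lemma he1: "hex_edges (4*int k, 0) = edge_of ` {Sd k True EAM, MR k, Sd k False EAM, Sd k False ELA, LR k, Sd k True ELA}"
  by (simp add: hex_edges_def edge_of_def phi_def algebra_simps insert_commute)
lemma he2: "hex_edges (4*int k+2, 0) = edge_of ` {Sd k True EBR, LR (Suc k), Sd k False EBR, Sd k False EMB, MR k, Sd k True EMB}"
  by (simp add: hex_edges_def edge_of_def phi_def algebra_simps insert_commute)
lemma he3: "hex_edges (4*int k+1, 3) = edge_of ` {Sd k True E23, Sd k True E3B, Sd k True EMB, Sd k True EAM, Sd k True EA1, Sd k True E12}"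
  by (simp add: hex_edges_def edge_of_def phi_def algebra_simps insert_commute)
lemma he4: "hex_edges (4*int k+1, -3) = edge_of ` {Sd k False EMB, Sd k False E3B, Sd k False E23, Sd k False E12, Sd k False EA1, Sd k False EAM}"
  by (simp add: hex_edges_def edge_of_def phi_def algebra_simps insert_commute)




lemma kd_cases_all: "(\<forall>d. P d) \<longleftrightarrow> P KL \<and> P KA \<and> P KM \<and> P KB \<and> P K1 \<and> P K2 \<and> P K3"
  by (metis kd.exhaust)

lemma ek_cases_all: "(\<forall>d. P d) \<longleftrightarrow> P ELA \<and> P EAM \<and> P EMB \<and> P EBR \<and> P EA1 \<and> P E12 \<and> P E23 \<and> P E3B"
  by (metis ek.exhaust)

definition UV :: "nat \<Rightarrow> vn set" where
 "UV k = {k} \<times> UNIV \<times> UNIV \<union> {Suc k} \<times> {KL} \<times> UNIV"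

definition UE :: "nat \<Rightarrow> ed set" where
 "UE k = range (\<lambda>(s,e). Sd k s e) \<union> {MR k, LR k, LR (Suc k)}"

lemma hexV_unit: "hex_verts (4*int k, 0) \<union> hex_verts (4*int k+2, 0) \<union> hex_verts (4*int k+1, 3) \<union> hex_verts (4*int k+1, -3) = phi ` UV k"
proof -
  have "UV k = {(k,KA,True),(k,KM,True),(k,KM,False),(k,KA,False),(k,KL,False),(k,KL,True)} \<union>
     {(k,KB,True),(Suc k,KL,True),(Suc k,KL,False),(k,KB,False),(k,KM,False),(k,KM,True)} \<union>
     {(k,K2,True),(k,K3,True),(k,KB,True),(k,KM,True),(k,KA,True),(k,K1,True)} \<union>
     {(k,KM,False),(k,KB,False),(k,K3,False),(k,K2,False),(k,K1,False),(k,KA,False)}"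
  proof (rule set_eqI)
    fix x :: vn
    obtain k' d s where x: "x = (k',d,s)" by (cases x) auto
    show "x \<in> UV k \<longleftrightarrow> x \<in> {(k,KA,True),(k,KM,True),(k,KM,False),(k,KA,False),(k,KL,False),(k,KL,True)} \<union>
     {(k,KB,True),(Suc k,KL,True),(Suc k,KL,False),(k,KB,False),(k,KM,False),(k,KM,True)} \<union>
     {(k,K2,True),(k,K3,True),(k,KB,True),(k,KM,True),(k,KA,True),(k,K1,True)} \<union>
     {(k,KM,False),(k,KB,False),(k,K3,False),(k,K2,False),(k,K1,False),(k,KA,False)}"
      unfolding x UV_def by (cases d; cases s; auto)
  qed
  then show ?thesis by (simp only: hv1 hv2 hv3 hv4 image_Un)
qed

lemma hexE_unit: "hex_edges (4*int k, 0) \<union> hex_edges (4*int k+2, 0) \<union> hex_edges (4*int k+1, 3) \<union> hex_edges (4*int k+1, -3) = edge_of ` UE k"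
proof -
  have "UE k = {Sd k True EAM, MR k, Sd k False EAM, Sd k False ELA, LR k, Sd k True ELA} \<union>
     {Sd k True EBR, LR (Suc k), Sd k False EBR, Sd k False EMB, MR k, Sd k True EMB} \<union>
     {Sd k True E23, Sd k True E3B, Sd k True EMB, Sd k True EAM, Sd k True EA1, Sd k True E12} \<union>
     {Sd k False EMB, Sd k False E3B, Sd k False E23, Sd k False E12, Sd k False EA1, Sd k False EAM}"
  proof (rule set_eqI)
    fix x :: ed
    show "x \<in> UE k \<longleftrightarrow> x \<in> {Sd k True EAM, MR k, Sd k False EAM, Sd k False ELA, LR k, Sd k True ELA} \<union>
     {Sd k True EBR, LR (Suc k), Sd k False EBR, Sd k False EMB, MR k, Sd k True EMB} \<union>
     {Sd k True E23, Sd k True E3B, Sd k True EMB, Sd k True EAM, Sd k True EA1, Sd k True E12} \<union>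
     {Sd k False EMB, Sd k False E3B, Sd k False E23, Sd k False E12, Sd k False EA1, Sd k False EAM}"
    proof (cases x)
      case (Sd k' s e) then show ?thesis by (cases e; cases s; auto simp: UE_def)
    qed (auto simp: UE_def)
  qed
  then show ?thesis by (simp only: he1 he2 he3 he4 image_Un)
qed

lemma VN_unit: "VN n = (\<Union>k<n. UV k)"
proof (rule set_eqI)
  fix x :: vn
  obtain k d s where x: "x = (k,d,s)" by (cases x) auto
  show "x \<in> VN n \<longleftrightarrow> x \<in> (\<Union>k<n. UV k)"
  proof
    assume "x \<in> VN n"
    then show "x \<in> (\<Union>k<n. UV k)"
    proof (cases "d = KL \<and> k = n")
      case True
      then obtain m where "n = Suc m" using \<open>x \<in> VN n\<close> x by (cases n) (auto simp: VN_def)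
      then show ?thesis using True x by (auto simp: UV_def intro!: bexI[of _ m])
    next
      case False
      then show ?thesis using \<open>x \<in> VN n\<close> x by (auto simp: VN_def UV_def split: if_splits)
    qed
  next
    assume "x \<in> (\<Union>k<n. UV k)"
    then show "x \<in> VN n" using x by (auto simp: VN_def UV_def)
  qed
qed

lemma ED_unit: "ED n = (\<Union>k<n. UE k)"
proof (rule set_eqI)
  fix x :: ed
  show "x \<in> ED n \<longleftrightarrow> x \<in> (\<Union>k<n. UE k)"
  proof
    assume a: "x \<in> ED n"
    show "x \<in> (\<Union>k<n. UE k)"
    proof (cases x)
      case (LR k)
      show ?thesis
      proof (cases "k = n")
        case True
        then obtain m where "n = Suc m" using a LR by (cases n) (auto simp: ED_def)
        then show ?thesis using True LR by (auto simp: UE_def intro!: bexI[of _ m])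
      next
        case False
        then show ?thesis using a LR by (auto simp: ED_def UE_def)
      qed
    qed (use a in \<open>auto simp: ED_def UE_def\<close>)
  next
    assume "x \<in> (\<Union>k<n. UE k)"
    then show "x \<in> ED n" by (auto simp: ED_def UE_def)
  qed
qed

lemma V_eq: "pyrene_V n = phi ` VN n"
proof -
  have "pyrene_V n = (\<Union>k<n. hex_verts (4*int k, 0) \<union> hex_verts (4*int k+2, 0) \<union> hex_verts (4*int k+1, 3) \<union> hex_verts (4*int k+1, -3))"
    unfolding pyrene_V_def hexes_eq by auto
  also have "\<dots> = (\<Union>k<n. phi ` UV k)" by (simp only: hexV_unit)
  also have "\<dots> = phi ` VN n" by (simp add: VN_unit image_UN)
  finally show ?thesis .
qed

lemma E_eq: "pyrene_E n = edge_of ` ED n"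
proof -
  have "pyrene_E n = (\<Union>k<n. hex_edges (4*int k, 0) \<union> hex_edges (4*int k+2, 0) \<union> hex_edges (4*int k+1, 3) \<union> hex_edges (4*int k+1, -3))"
    unfolding pyrene_E_def hexes_eq by auto
  also have "\<dots> = (\<Union>k<n. edge_of ` UE k)" by (simp only: hexE_unit)
  also have "\<dots> = edge_of ` ED n" by (simp add: ED_unit image_UN)
  finally show ?thesis .
qed




lemma pm_transfer:
  "perfect_matching (phi ` V) (edge_of ` E) (edge_of ` N) \<longleftrightarrow> N \<subseteq> E \<and> (\<forall>a\<in>V. \<exists>!d. d \<in> N \<and> inc a d)"
proof -
  have 1: "edge_of ` N \<subseteq> edge_of ` E \<longleftrightarrow> N \<subseteq> E" using inj_edge_of by (simp add: inj_image_subset_iff)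
  have 2: "(\<exists>!e. e \<in> edge_of ` N \<and> phi a \<in> e) \<longleftrightarrow> (\<exists>!d. d \<in> N \<and> inc a d)" for a
  proof
    assume "\<exists>!e. e \<in> edge_of ` N \<and> phi a \<in> e"
    then obtain e where e: "e \<in> edge_of ` N" "phi a \<in> e" and u: "\<And>e'. e' \<in> edge_of ` N \<and> phi a \<in> e' \<Longrightarrow> e' = e" by (metis (no_types, lifting))
    from e obtain d where d: "d \<in> N" "e = edge_of d" by auto
    show "\<exists>!d. d \<in> N \<and> inc a d"
    proof (rule ex1I[of _ d])
      show "d \<in> N \<and> inc a d" using d e by (simp add: phi_in_edge)
      fix d' assume "d' \<in> N \<and> inc a d'"
      then have "edge_of d' = e" using u by (simp add: phi_in_edge)
      then show "d' = d" using d by simp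
    qed
  next
    assume "\<exists>!d. d \<in> N \<and> inc a d"
    then obtain d where d: "d \<in> N" "inc a d" and u: "\<And>d'. d' \<in> N \<and> inc a d' \<Longrightarrow> d' = d" by (metis (no_types, lifting))
    show "\<exists>!e. e \<in> edge_of ` N \<and> phi a \<in> e"
    proof (rule ex1I[of _ "edge_of d"])
      show "edge_of d \<in> edge_of ` N \<and> phi a \<in> edge_of d" using d by (simp add: phi_in_edge)
      fix e assume "e \<in> edge_of ` N \<and> phi a \<in> e"
      then obtain d' where "d' \<in> N" "e = edge_of d'" "inc a d'" by (auto simp: phi_in_edge)
      then show "e = edge_of d" using u by simp
    qed
  qed
  show ?thesis unfolding perfect_matching_def 1 by (simp add: 2)
qed

lemma sub_edge_image: "M \<subseteq> edge_of ` E \<Longrightarrow> M = edge_of ` {d \<in> E. edge_of d \<in> M}"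
  by auto

fun IS :: "vn \<Rightarrow> ed set" where
  "IS (k,KL,s) = {LR k, Sd k s ELA} \<union> (if 0 < k then {Sd (k-1) s EBR} else {})"
| "IS (k,KA,s) = {Sd k s ELA, Sd k s EAM, Sd k s EA1}"
| "IS (k,KM,s) = {Sd k s EAM, Sd k s EMB, MR k}"
| "IS (k,KB,s) = {Sd k s EMB, Sd k s EBR, Sd k s E3B}"
| "IS (k,K1,s) = {Sd k s EA1, Sd k s E12}"
| "IS (k,K2,s) = {Sd k s E12, Sd k s E23}"
| "IS (k,K3,s) = {Sd k s E23, Sd k s E3B}"

lemma inc_IS: "inc a d \<longleftrightarrow> d \<in> IS a"
proof -
  obtain k kd s where a: "a = (k,kd,s)" by (cases a) auto
  show ?thesis unfolding a
    by (cases d rule: ends.cases; cases kd; auto simp: inc_def)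
qed

definition npm :: "nat \<Rightarrow> ed set \<Rightarrow> ed set \<Rightarrow> bool" where
  "npm n X N \<longleftrightarrow> N \<subseteq> X \<and> (\<forall>a\<in>VN n. \<exists>!d. d \<in> N \<and> d \<in> IS a)"

lemma pm_npm: "perfect_matching (phi ` VN n) (edge_of ` X) (edge_of ` N) \<longleftrightarrow> npm n X N"
  unfolding pm_transfer npm_def inc_IS ..

datatype letter = AA | AB | BA | BB | LL | RR
datatype st = SA | SB | SL | SR

fun stp :: "letter \<Rightarrow> bool \<Rightarrow> st" where
  "stp AA s = SA" | "stp AB s = (if s then SA else SB)" | "stp BA s = (if s then SB else SA)"
| "stp BB s = SB" | "stp LL s = SL" | "stp RR s = SR"

fun sideE :: "st \<Rightarrow> ek \<Rightarrow> bool" where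
  "sideE SA e = (e = EAM \<or> e = E12 \<or> e = E3B)"
| "sideE SB e = (e = EMB \<or> e = E23 \<or> e = EA1)"
| "sideE SL e = (e = ELA \<or> e = E12 \<or> e = E3B)"
| "sideE SR e = (e = EBR \<or> e = EA1 \<or> e = E23)"

definition valid :: "letter list \<Rightarrow> bool" where
  "valid w \<longleftrightarrow> (\<forall>k. Suc k < length w \<longrightarrow> \<not> (w!k = RR \<and> w!Suc k = LL))"

definition rung_in :: "letter list \<Rightarrow> nat \<Rightarrow> bool" where
  "rung_in w k \<longleftrightarrow> \<not> (0 < k \<and> w!(k-1) = RR) \<and> \<not> (k < length w \<and> w!k = LL)"

fun inM :: "letter list \<Rightarrow> ed \<Rightarrow> bool" where
  "inM w (Sd k s e) = sideE (stp (w!k) s) e"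
| "inM w (MR k) = (w!k = LL \<or> w!k = RR)"
| "inM w (LR k) = rung_in w k"

definition Nw :: "nat \<Rightarrow> letter list \<Rightarrow> ed set" where
  "Nw n w = {d \<in> ED n. inM w d}"

definition W :: "nat \<Rightarrow> letter list set" where
  "W n = {w. length w = n \<and> valid w}"

lemma ex1_2: "x \<noteq> y \<Longrightarrow> (\<exists>!d. d \<in> N \<and> d \<in> {x,y}) \<longleftrightarrow> (x \<in> N \<and> y \<notin> N) \<or> (x \<notin> N \<and> y \<in> N)"
  by auto
lemma ex1_3: "x \<noteq> y \<Longrightarrow> x \<noteq> z \<Longrightarrow> y \<noteq> z \<Longrightarrow> (\<exists>!d. d \<in> N \<and> d \<in> {x,y,z}) \<longleftrightarrow>
   (x \<in> N \<and> y \<notin> N \<and> z \<notin> N) \<or> (x \<notin> N \<and> y \<in> N \<and> z \<notin> N) \<or> (x \<notin> N \<and> y \<notin> N \<and> z \<in> N)"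
  by auto

lemma IS_KL: "IS (k,KL,s) = (if 0 < k then {LR k, Sd k s ELA, Sd (k-1) s EBR} else {LR k, Sd k s ELA})"
  by auto




lemma ED_mem[simp]:
  "Sd k s e \<in> ED n \<longleftrightarrow> k < n" "MR k \<in> ED n \<longleftrightarrow> k < n" "LR k \<in> ED n \<longleftrightarrow> k \<le> n \<and> 0 < n"
  by (auto simp: ED_def)

lemma VN_mem[simp]: "(k,kd,s) \<in> VN n \<longleftrightarrow> (if kd = KL then k \<le> n \<and> 0 < n else k < n)"
  by (auto simp: VN_def)

lemma Nw_mem: "d \<in> Nw n w \<longleftrightarrow> d \<in> ED n \<and> inM w d"
  by (simp add: Nw_def)

lemma sideE_stp_ELA[simp]: "sideE (stp x s) ELA \<longleftrightarrow> x = LL" by (cases x) auto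
lemma sideE_stp_EBR[simp]: "sideE (stp x s) EBR \<longleftrightarrow> x = RR" by (cases x) auto

lemma Nw_pm: assumes "w \<in> W n" shows "npm n (ED n) (Nw n w)"
  unfolding npm_def
proof (intro conjI ballI)
  have len: "length w = n" and v: "valid w" using assms by (auto simp: W_def)
  show "Nw n w \<subseteq> ED n" by (auto simp: Nw_def)
  fix a assume a: "a \<in> VN n"
  obtain k kd s where ak: "a = (k,kd,s)" by (cases a) auto
  show "\<exists>!d. d \<in> Nw n w \<and> d \<in> IS a"
  proof (cases "kd = KL")
    case True
    then have kn: "k \<le> n" "0 < n" using a ak by auto
    show ?thesis
    proof (cases "0 < k")
      case True
      have "Suc (k-1) < length w \<longrightarrow> \<not> (w!(k-1) = RR \<and> w!(Suc (k-1)) = LL)"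
        using v unfolding valid_def by blast
      then have nv: "\<not> (w!(k-1) = RR \<and> w!k = LL)" if "k < n"
        using that True len by simp
      have "\<exists>!d. d \<in> Nw n w \<and> d \<in> {LR k, Sd k s ELA, Sd (k-1) s EBR}"
        apply (subst ex1_3) apply simp apply simp apply simp
        using True kn nv len by (auto simp: Nw_mem rung_in_def)
      then show ?thesis using True unfolding ak \<open>kd = KL\<close> IS_KL by simp
    next
      case False
      have "\<exists>!d. d \<in> Nw n w \<and> d \<in> {LR k, Sd k s ELA}"
        apply (subst ex1_2) apply simp
        using False kn len by (auto simp: Nw_mem rung_in_def)
      then show ?thesis using False unfolding ak \<open>kd = KL\<close> IS_KL by simp
    qed
  next
    case False
    then have kn: "k < n" using a ak by auto
    show ?thesis using kn False unfolding ak
      apply (cases kd)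
      apply (simp_all only: IS.simps)
      apply simp
      apply (subst ex1_3, simp, simp, simp, cases "w!k"; cases s; simp add: Nw_mem)+
      apply (subst ex1_2, simp, cases "w!k"; cases s; simp add: Nw_mem)+
      done
  qed
qed




definition letter_of :: "ed set \<Rightarrow> nat \<Rightarrow> letter" where
  "letter_of N k = (if Sd k True ELA \<in> N then LL else if Sd k True EBR \<in> N then RR
     else if Sd k True EAM \<in> N then (if Sd k False EAM \<in> N then AA else AB)
     else (if Sd k False EAM \<in> N then BA else BB))"

lemma sideE_ELA: "sideE st ELA \<longleftrightarrow> st = SL" by (cases st) auto
lemma sideE_EBR: "sideE st EBR \<longleftrightarrow> st = SR" by (cases st) auto

context
  fixes n N assumes pm: "npm n (ED n) N"
begin

lemma N_sub: "N \<subseteq> ED n" using pm by (simp add: npm_def)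

lemma ex1_at: "a \<in> VN n \<Longrightarrow> \<exists>!d. d \<in> N \<and> d \<in> IS a"
  using pm by (simp add: npm_def)

lemma local_side:
  assumes k: "k < n"
  shows "\<exists>st. (\<forall>e. Sd k s e \<in> N \<longleftrightarrow> sideE st e) \<and> (MR k \<in> N \<longleftrightarrow> st = SL \<or> st = SR)"
proof -
  have fA: "\<exists>!d. d \<in> N \<and> d \<in> {Sd k s ELA, Sd k s EAM, Sd k s EA1}" using ex1_at[of "(k,KA,s)"] k by simp
  have fM: "\<exists>!d. d \<in> N \<and> d \<in> {Sd k s EAM, Sd k s EMB, MR k}" using ex1_at[of "(k,KM,s)"] k by simp
  have fB: "\<exists>!d. d \<in> N \<and> d \<in> {Sd k s EMB, Sd k s EBR, Sd k s E3B}" using ex1_at[of "(k,KB,s)"] k by simp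
  have f1: "\<exists>!d. d \<in> N \<and> d \<in> {Sd k s EA1, Sd k s E12}" using ex1_at[of "(k,K1,s)"] k by simp
  have f2: "\<exists>!d. d \<in> N \<and> d \<in> {Sd k s E12, Sd k s E23}" using ex1_at[of "(k,K2,s)"] k by simp
  have f3: "\<exists>!d. d \<in> N \<and> d \<in> {Sd k s E23, Sd k s E3B}" using ex1_at[of "(k,K3,s)"] k by simp
  have A: "(Sd k s ELA \<in> N \<and> Sd k s EAM \<notin> N \<and> Sd k s EA1 \<notin> N) \<or> (Sd k s ELA \<notin> N \<and> Sd k s EAM \<in> N \<and> Sd k s EA1 \<notin> N) \<or> (Sd k s ELA \<notin> N \<and> Sd k s EAM \<notin> N \<and> Sd k s EA1 \<in> N)"
    using fA by (subst (asm) ex1_3) auto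
  have M: "(Sd k s EAM \<in> N \<and> Sd k s EMB \<notin> N \<and> MR k \<notin> N) \<or> (Sd k s EAM \<notin> N \<and> Sd k s EMB \<in> N \<and> MR k \<notin> N) \<or> (Sd k s EAM \<notin> N \<and> Sd k s EMB \<notin> N \<and> MR k \<in> N)"
    using fM by (subst (asm) ex1_3) auto
  have B: "(Sd k s EMB \<in> N \<and> Sd k s EBR \<notin> N \<and> Sd k s E3B \<notin> N) \<or> (Sd k s EMB \<notin> N \<and> Sd k s EBR \<in> N \<and> Sd k s E3B \<notin> N) \<or> (Sd k s EMB \<notin> N \<and> Sd k s EBR \<notin> N \<and> Sd k s E3B \<in> N)"
    using fB by (subst (asm) ex1_3) auto
  have T1: "Sd k s EA1 \<in> N \<longleftrightarrow> Sd k s E12 \<notin> N" using f1 by (subst (asm) ex1_2) auto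
  have T2: "Sd k s E12 \<in> N \<longleftrightarrow> Sd k s E23 \<notin> N" using f2 by (subst (asm) ex1_2) auto
  have T3: "Sd k s E23 \<in> N \<longleftrightarrow> Sd k s E3B \<notin> N" using f3 by (subst (asm) ex1_2) auto
  define st where "st = (if MR k \<in> N then (if Sd k s EA1 \<in> N then SR else SL) else (if Sd k s EA1 \<in> N then SB else SA))"
  show ?thesis
    apply (rule exI[of _ st])
    unfolding ek_cases_all
    using A M B T1 T2 T3 unfolding st_def by auto
qed

lemma L_fact:
  assumes "k \<le> n" "0 < n"
  shows "(LR k \<in> N \<longleftrightarrow> \<not> (k < n \<and> Sd k s ELA \<in> N) \<and> \<not> (0 < k \<and> Sd (k-1) s EBR \<in> N))
       \<and> \<not> (k < n \<and> Sd k s ELA \<in> N \<and> 0 < k \<and> Sd (k-1) s EBR \<in> N)"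
proof (cases "0 < k")
  case True
  have "(k,KL,s) \<in> VN n" using assms by simp
  from ex1_at[OF this] have f: "\<exists>!d. d \<in> N \<and> d \<in> {LR k, Sd k s ELA, Sd (k-1) s EBR}"
    by (simp only: IS_KL if_P[OF True])
  have "Sd n s ELA \<notin> N" using N_sub by auto
  then show ?thesis using f True by (subst (asm) ex1_3) (auto, (metis linorder_neqE_nat assms(1) leD)+)
next
  case False
  have "(k,KL,s) \<in> VN n" using assms by simp
  from ex1_at[OF this] have f: "\<exists>!d. d \<in> N \<and> d \<in> {LR k, Sd k s ELA}"
    by (simp only: IS_KL if_not_P[OF False])
  show ?thesis using f False assms by (subst (asm) ex1_2) auto
qed

lemma ebr_from_ela:
  assumes k: "k < n" and ag: "Sd k True ELA \<in> N \<longleftrightarrow> Sd k False ELA \<in> N"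
  shows "Sd k True EBR \<in> N \<longleftrightarrow> Sd k False EBR \<in> N"
proof -
  obtain sT where sT: "\<forall>e. Sd k True e \<in> N \<longleftrightarrow> sideE sT e" "MR k \<in> N \<longleftrightarrow> sT = SL \<or> sT = SR"
    using local_side[OF k] by blast
  obtain sF where sF: "\<forall>e. Sd k False e \<in> N \<longleftrightarrow> sideE sF e" "MR k \<in> N \<longleftrightarrow> sF = SL \<or> sF = SR"
    using local_side[OF k] by blast
  show ?thesis using sT sF ag by (cases sT; cases sF; simp)
qed

lemma agree: "k < n \<Longrightarrow> (Sd k True ELA \<in> N \<longleftrightarrow> Sd k False ELA \<in> N) \<and> (Sd k True EBR \<in> N \<longleftrightarrow> Sd k False EBR \<in> N)"
proof (induction k)
  case 0
  have "Sd 0 True ELA \<in> N \<longleftrightarrow> Sd 0 False ELA \<in> N"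
    using L_fact[of 0 True] L_fact[of 0 False] 0 by auto
  then show ?case using ebr_from_ela[OF 0] by simp
next
  case (Suc k)
  then have "Sd k True EBR \<in> N \<longleftrightarrow> Sd k False EBR \<in> N" by simp
  then have "Sd (Suc k) True ELA \<in> N \<longleftrightarrow> Sd (Suc k) False ELA \<in> N"
    using L_fact[of "Suc k" True] L_fact[of "Suc k" False] Suc.prems by auto
  then show ?case using ebr_from_ela[OF Suc.prems] by simp
qed

lemma side_ok2:
  assumes k: "k < n"
  shows "(Sd k s e \<in> N \<longleftrightarrow> sideE (stp (letter_of N k) s) e) \<and> (MR k \<in> N \<longleftrightarrow> letter_of N k = LL \<or> letter_of N k = RR)"
proof -
  obtain sT where sT: "\<forall>e. Sd k True e \<in> N \<longleftrightarrow> sideE sT e" "MR k \<in> N \<longleftrightarrow> sT = SL \<or> sT = SR"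
    using local_side[OF k] by blast
  obtain sF where sF: "\<forall>e. Sd k False e \<in> N \<longleftrightarrow> sideE sF e" "MR k \<in> N \<longleftrightarrow> sF = SL \<or> sF = SR"
    using local_side[OF k] by blast
  have ag: "sideE sT ELA = sideE sF ELA" "sideE sT EBR = sideE sF EBR" using agree[OF k] sT sF by auto
  have lt: "stp (letter_of N k) True = sT \<and> stp (letter_of N k) False = sF \<and> (MR k \<in> N \<longleftrightarrow> letter_of N k = LL \<or> letter_of N k = RR)"
    using sT sF ag unfolding letter_of_def by (cases sT; cases sF; simp)
  show ?thesis using lt sT sF by (cases s) auto
qed

lemma letter_LL: "k < n \<Longrightarrow> letter_of N k = LL \<longleftrightarrow> Sd k True ELA \<in> N"
  using side_ok2[of k True ELA] by (cases "letter_of N k") auto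

lemma letter_RR: "k < n \<Longrightarrow> letter_of N k = RR \<longleftrightarrow> Sd k True EBR \<in> N"
  using side_ok2[of k True EBR] by (cases "letter_of N k") auto

definition "wd = map (letter_of N) [0..<n]"

lemma wd_W: "wd \<in> W n"
  unfolding W_def valid_def wd_def
proof (intro CollectI conjI allI impI)
  fix k assume k: "Suc k < length (map (letter_of N) [0..<n])"
  then have k': "Suc k < n" by simp
  show "\<not> (map (letter_of N) [0..<n] ! k = RR \<and> map (letter_of N) [0..<n] ! Suc k = LL)"
    using L_fact[of "Suc k" True] k' letter_LL[OF k'] letter_RR[of k] by auto
qed simp

lemma N_eq: "N = Nw n wd"
proof (rule set_eqI)
  fix d show "d \<in> N \<longleftrightarrow> d \<in> Nw n wd"
  proof (cases d)
    case (Sd k s e)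
    show ?thesis
    proof (cases "k < n")
      case True then show ?thesis using side_ok2[OF True, of s e] Sd by (simp add: Nw_mem wd_def)
    next
      case False then show ?thesis using N_sub Sd by (auto simp: Nw_mem)
    qed
  next
    case (MR k)
    show ?thesis
    proof (cases "k < n")
      case True then show ?thesis using side_ok2[OF True, of True ELA] MR by (simp add: Nw_mem wd_def)
    next
      case False then show ?thesis using N_sub MR by (auto simp: Nw_mem)
    qed
  next
    case (LR k)
    show ?thesis
    proof (cases "k \<le> n \<and> 0 < n")
      case True
      have r: "rung_in wd k \<longleftrightarrow> \<not> (0 < k \<and> Sd (k-1) True EBR \<in> N) \<and> \<not> (k < n \<and> Sd k True ELA \<in> N)"
        unfolding rung_in_def wd_def using True letter_LL[of k] letter_RR[of "k-1"] by auto
      show ?thesis using L_fact[of k True] True LR r by (auto simp: Nw_mem)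
    next
      case False then show ?thesis using N_sub LR by (auto simp: Nw_mem)
    qed
  qed
qed

end

lemma pm_char: "npm n (ED n) N \<longleftrightarrow> (\<exists>w\<in>W n. N = Nw n w)"
  using N_eq wd_W Nw_pm by blast

lemma letter_of_Nw: "w \<in> W n \<Longrightarrow> k < n \<Longrightarrow> letter_of (Nw n w) k = w!k"
  by (cases "w!k") (auto simp: letter_of_def Nw_mem)

lemma Nw_inj: "inj_on (Nw n) (W n)"
proof (rule inj_onI)
  fix w w' assume a: "w \<in> W n" "w' \<in> W n" "Nw n w = Nw n w'"
  show "w = w'"
  proof (rule nth_equalityI)
    show "length w = length w'" using a by (simp add: W_def)
    fix k assume "k < length w"
    then have "k < n" using a by (simp add: W_def)
    then show "w!k = w'!k" using letter_of_Nw[OF a(1)] letter_of_Nw[OF a(2)] a(3) by metis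
  qed
qed




lemma PM_set: "{M. perfect_matching (pyrene_V n) (pyrene_E n) M} = (\<lambda>w. edge_of ` Nw n w) ` W n"
proof (rule set_eqI, rule iffI)
  fix M assume "M \<in> {M. perfect_matching (pyrene_V n) (pyrene_E n) M}"
  then have pm: "perfect_matching (phi ` VN n) (edge_of ` ED n) M" by (simp add: V_eq E_eq)
  then have sub: "M \<subseteq> edge_of ` ED n" by (simp add: perfect_matching_def)
  define N where "N = {d \<in> ED n. edge_of d \<in> M}"
  have M: "M = edge_of ` N" unfolding N_def using sub by (rule sub_edge_image)
  have "perfect_matching (phi ` VN n) (edge_of ` ED n) (edge_of ` N)" using pm M by simp
  then have "npm n (ED n) N" by (simp only: pm_npm)
  then have "\<exists>w\<in>W n. N = Nw n w" by (simp only: pm_char)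
  then obtain w where w: "w \<in> W n" "N = Nw n w" by (elim bexE)
  show "M \<in> (\<lambda>w. edge_of ` Nw n w) ` W n"
    by (rule image_eqI[where x=w]) (use M w in simp_all)
next
  fix M assume "M \<in> (\<lambda>w. edge_of ` Nw n w) ` W n"
  then obtain w where w: "w \<in> W n" "M = edge_of ` Nw n w" by auto
  then show "M \<in> {M. perfect_matching (pyrene_V n) (pyrene_E n) M}"
    using Nw_pm[OF w(1)] by (simp add: V_eq E_eq pm_npm)
qed

lemma PM_inj: "inj_on (\<lambda>w. edge_of ` Nw n w) (W n)"
  using Nw_inj inj_edge_of by (simp add: inj_on_def inj_image_eq_iff)

fun c :: "letter \<Rightarrow> nat" where
  "c AA = 3" | "c BB = 3" | "c AB = 2" | "c BA = 2" | "c LL = 1" | "c RR = 1"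

definition cost :: "letter list \<Rightarrow> nat" where
  "cost w = sum_list (map c w)"

lemma cost_sum: "cost w = (\<Sum>k<length w. c (w!k))"
  unfolding cost_def by (simp add: sum_list_sum_nth atLeast0LessThan)

fun Sk :: "nat \<Rightarrow> letter \<Rightarrow> ed set" where
  "Sk k AA = {MR k, Sd k True EMB, Sd k False EMB}"
| "Sk k BB = {MR k, Sd k True EAM, Sd k False EAM}"
| "Sk k AB = {Sd k False E12, Sd k True E23}"
| "Sk k BA = {Sd k True E12, Sd k False E23}"
| "Sk k LL = {LR k}"
| "Sk k RR = {LR (Suc k)}"

definition Sw :: "letter list \<Rightarrow> ed set" where
  "Sw w = (\<Union>k<length w. Sk k (w!k))"

lemma finite_Sk: "finite (Sk k x)" by (cases x) auto

lemma card_Sk: "card (Sk k x) = c x" by (cases x) auto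

lemma valid_nth: "valid w \<Longrightarrow> Suc k < length w \<Longrightarrow> w!k = RR \<Longrightarrow> w!Suc k \<noteq> LL"
  unfolding valid_def by blast

lemma card_Sw: assumes "w \<in> W n" shows "card (Sw w) = cost w"
proof -
  have v: "valid w" using assms by (simp add: W_def)
  have "card (Sw w) = (\<Sum>k<length w. card (Sk k (w!k)))"
    unfolding Sw_def
  proof (rule card_UN_disjoint)
    show "finite {..<length w}" by simp
    show "\<forall>i\<in>{..<length w}. finite (Sk i (w ! i))" using finite_Sk by blast
    show "\<forall>i\<in>{..<length w}. \<forall>j\<in>{..<length w}. i \<noteq> j \<longrightarrow> Sk i (w ! i) \<inter> Sk j (w ! j) = {}"
    proof (intro ballI impI)
      fix i j assume ij: "i \<in> {..<length w}" "j \<in> {..<length w}" "i \<noteq> j"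
      have a: "\<not> (w!i = RR \<and> w!j = LL \<and> j = Suc i)" using valid_nth[OF v, of i] ij by auto
      have b: "\<not> (w!j = RR \<and> w!i = LL \<and> i = Suc j)" using valid_nth[OF v, of j] ij by auto
      show "Sk i (w ! i) \<inter> Sk j (w ! j) = {}"
        using ij(3) a b by (cases "w!i"; cases "w!j"; auto)
    qed
  qed
  also have "\<dots> = cost w" by (simp add: cost_sum card_Sk)
  finally show ?thesis .
qed

lemma Sw_sub: assumes "w \<in> W n" shows "Sw w \<subseteq> ED n - Nw n w"
proof
  fix d assume "d \<in> Sw w"
  then obtain k where k: "k < length w" "d \<in> Sk k (w!k)" by (auto simp: Sw_def)
  have len: "length w = n" using assms by (simp add: W_def)
  show "d \<in> ED n - Nw n w" using k len by (cases "w!k") (auto simp: Nw_mem rung_in_def)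
qed

lemma internal_hit:
  assumes "w'!k \<noteq> y" "y \<noteq> LL" "y \<noteq> RR"
  shows "\<exists>d\<in>Sk k y. inM w' d"
  using assms by (cases y; cases "w'!k"; simp)

lemma hit:
  assumes w: "w \<in> W n" and w': "w' \<in> W n" and ne: "w \<noteq> w'"
  shows "\<exists>k<n. \<exists>d\<in>Sk k (w!k). inM w' d"
proof -
  have len: "length w = n" "length w' = n" and v: "valid w" "valid w'" using w w' by (auto simp: W_def)
  define D where "D = {k. k < n \<and> w!k \<noteq> w'!k}"
  have Dne: "D \<noteq> {}"
  proof
    assume "D = {}"
    have "w = w'"
    proof (rule nth_equalityI)
      show "length w = length w'" using len by simp
      fix i assume "i < length w"
      then show "w!i = w'!i" using \<open>D = {}\<close> len by (auto simp: D_def)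
    qed
    then show False using ne by simp
  qed
  have finD: "finite D" by (simp add: D_def)
  show ?thesis
  proof (cases "\<exists>k\<in>D. w!k \<noteq> LL \<and> w!k \<noteq> RR")
    case True
    then obtain k where k: "k \<in> D" "w!k \<noteq> LL" "w!k \<noteq> RR" by blast
    have "k < n" "w'!k \<noteq> w!k" using k(1) by (auto simp: D_def)
    then have ex: "\<exists>d\<in>Sk k (w!k). inM w' d" using internal_hit[of w' k "w!k"] k(2,3) by simp
    show ?thesis apply (rule exI[of _ k]) using \<open>k < n\<close> ex by simp
  next
    case False
    then have LR: "\<And>k. k \<in> D \<Longrightarrow> w!k = LL \<or> w!k = RR" by blast
    show ?thesis
    proof (cases "\<exists>k\<in>D. w!k = RR")
      case True
      define DR where "DR = {k\<in>D. w!k = RR}"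
      have fin: "finite DR" "DR \<noteq> {}" using True finD by (auto simp: DR_def)
      define k where "k = Max DR"
      have kin: "k \<in> DR" using fin unfolding k_def by (rule Max_in)
      have kmax: "\<And>j. j \<in> DR \<Longrightarrow> j \<le> k" using fin(1) unfolding k_def by (rule Max_ge)
      have kD: "k < n" "w!k = RR" "w'!k \<noteq> RR" using kin by (auto simp: DR_def D_def)
      have "\<not> (Suc k < n \<and> w'!Suc k = LL)"
      proof
        assume h: "Suc k < n \<and> w'!Suc k = LL"
        then have "w!Suc k \<noteq> LL" using valid_nth[OF v(1), of k] kD len by simp
        then have "Suc k \<in> D" using h by (auto simp: D_def)
        then have "w!Suc k = RR" using LR \<open>w!Suc k \<noteq> LL\<close> by blast
        then have "Suc k \<in> DR" using \<open>Suc k \<in> D\<close> by (simp add: DR_def)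
        then have "Suc k \<le> k" by (rule kmax)
        then show False by simp
      qed
      then have "inM w' (LR (Suc k))" using kD len by (simp add: rung_in_def)
      then have ex: "\<exists>d\<in>Sk k (w!k). inM w' d" using kD by simp
      show ?thesis apply (rule exI[of _ k]) using kD(1) ex by simp
    next
      case False
      have allL: "w!k = LL" if "k \<in> D" for k
      proof -
        have "w!k \<noteq> RR" using False that by auto
        then show ?thesis using LR[OF that] by simp
      qed
      define k where "k = Min D"
      have kin: "k \<in> D" using finD Dne unfolding k_def by (rule Min_in)
      have kmin: "\<And>j. j \<in> D \<Longrightarrow> k \<le> j" using finD unfolding k_def by (rule Min_le)
      have kD1: "k < n" "w!k \<noteq> w'!k" using kin by (simp_all add: D_def)
      have kD2: "w!k = LL" using allL[OF kin] .
      have kD: "k < n" "w!k = LL" "w'!k \<noteq> LL" using kD1 kD2 by simp_all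
      have "\<not> (0 < k \<and> w'!(k-1) = RR)"
      proof
        assume h: "0 < k \<and> w'!(k-1) = RR"
        have "k - 1 \<notin> D"
        proof
          assume "k - 1 \<in> D" then have "k \<le> k - 1" by (rule kmin)
          moreover have "0 < k" using h by simp
          ultimately show False by arith
        qed
        then have "w!(k-1) = w'!(k-1)" using h kD by (simp add: D_def)
        then have "w!(k-1) = RR" using h by simp
        then show False using valid_nth[OF v(1), of "k-1"] h kD len by simp
      qed
      then have "inM w' (LR k)" using kD len by (simp add: rung_in_def)
      then have ex: "\<exists>d\<in>Sk k (w!k). inM w' d" using kD by simp
      show ?thesis apply (rule exI[of _ k]) using kD(1) ex by simp
    qed
  qed
qed

lemma pm_minus: "perfect_matching V (E - S) M \<longleftrightarrow> perfect_matching V E M \<and> M \<inter> S = {}"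
  unfolding perfect_matching_def by auto

abbreviation "GV n \<equiv> phi ` VN n"
abbreviation "GE n \<equiv> edge_of ` ED n"

lemma PM_G: "perfect_matching (GV n) (GE n) M \<longleftrightarrow> (\<exists>w\<in>W n. M = edge_of ` Nw n w)"
proof -
  have e: "{M. perfect_matching (GV n) (GE n) M} = (\<lambda>w. edge_of ` Nw n w) ` W n"
    using PM_set[of n] by (simp add: V_eq E_eq)
  show ?thesis using e[THEN eqset_imp_iff, of M] by (simp add: image_iff)
qed

lemma upper_afs:
  assumes w: "w \<in> W n"
  shows "anti_forcing_set (GV n) (GE n) (edge_of ` Nw n w) (edge_of ` Sw w)"
  unfolding anti_forcing_set_def
proof (intro conjI allI)
  show "edge_of ` Sw w \<subseteq> GE n - edge_of ` Nw n w"
    using Sw_sub[OF w] inj_edge_of by (auto simp: inj_image_mem_iff)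
  fix M'
  show "perfect_matching (GV n) (GE n - edge_of ` Sw w) M' \<longleftrightarrow> M' = edge_of ` Nw n w"
  proof
    assume "perfect_matching (GV n) (GE n - edge_of ` Sw w) M'"
    then have a: "perfect_matching (GV n) (GE n) M'" "M' \<inter> edge_of ` Sw w = {}"
      by (auto simp: pm_minus)
    from a(1) have "\<exists>w'\<in>W n. M' = edge_of ` Nw n w'" by (simp only: PM_G)
    then obtain w' where w': "w' \<in> W n" "M' = edge_of ` Nw n w'" by (elim bexE)
    have "w' = w"
    proof (rule ccontr)
      assume "w' \<noteq> w"
      then have ne: "w \<noteq> w'" by simp
      obtain k where k: "k < n" "\<exists>d\<in>Sk k (w!k). inM w' d" using hit[OF w w'(1) ne] by blast
      then obtain d where kd: "k < n" "d \<in> Sk k (w!k)" "inM w' d" by blast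
      have "d \<in> Sw w" using kd w by (auto simp: Sw_def W_def)
      then have "d \<in> ED n" using Sw_sub[OF w] by auto
      then have "d \<in> Nw n w'" using kd by (simp add: Nw_mem)
      then show False using a(2) w'(2) \<open>d \<in> Sw w\<close> by auto
    qed
    then show "M' = edge_of ` Nw n w" using w' by simp
  next
    assume "M' = edge_of ` Nw n w"
    moreover have "perfect_matching (GV n) (GE n) (edge_of ` Nw n w)"
    proof -
      have "\<exists>w'\<in>W n. edge_of ` Nw n w = edge_of ` Nw n w'" using w by blast
      then show ?thesis by (simp only: PM_G)
    qed
    moreover have "edge_of ` Nw n w \<inter> edge_of ` Sw w = {}"
      using Sw_sub[OF w] inj_edge_of by (auto simp: inj_image_mem_iff)
    ultimately show "perfect_matching (GV n) (GE n - edge_of ` Sw w) M'" by (simp add: pm_minus)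
  qed
qed




lemma rung_upd_same:
  assumes "k' \<noteq> k" "k' \<noteq> Suc k"
  shows "rung_in (w[k:=x]) k' = rung_in w k'"
proof -
  have "0 < k' \<Longrightarrow> k' - 1 \<noteq> k" using assms by auto
  then show ?thesis unfolding rung_in_def using assms by (auto simp: nth_list_update_neq)
qed

lemma rung_upd_k: "k < length w \<Longrightarrow> rung_in (w[k:=x]) k \<longleftrightarrow> \<not> (0 < k \<and> w!(k-1) = RR) \<and> x \<noteq> LL"
  unfolding rung_in_def by (cases k) auto

lemma rung_upd_Sk: "k < length w \<Longrightarrow> rung_in (w[k:=x]) (Suc k) \<longleftrightarrow> x \<noteq> RR \<and> \<not> (Suc k < length w \<and> w!Suc k = LL)"
  unfolding rung_in_def by auto

lemma diff1:
  assumes k: "k < length w" and d: "inM (w[k:=x]) d" "\<not> inM w d"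
  shows "(\<exists>s e. d = Sd k s e \<and> sideE (stp x s) e \<and> \<not> sideE (stp (w!k) s) e)
       \<or> (d = MR k \<and> (x = LL \<or> x = RR) \<and> \<not> (w!k = LL \<or> w!k = RR))
       \<or> (d = LR k \<and> \<not> (0 < k \<and> w!(k-1) = RR) \<and> x \<noteq> LL \<and> \<not> rung_in w k)
       \<or> (d = LR (Suc k) \<and> x \<noteq> RR \<and> \<not> (Suc k < length w \<and> w!Suc k = LL) \<and> \<not> rung_in w (Suc k))"
proof (cases d)
  case (Sd k' s e)
  show ?thesis
  proof (cases "k' = k")
    case True then show ?thesis using Sd d k by auto
  next
    case False then show ?thesis using Sd d by (simp add: nth_list_update_neq)
  qed
next
  case (MR k')
  show ?thesis
  proof (cases "k' = k")
    case True then show ?thesis using MR d k by auto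
  next
    case False then show ?thesis using MR d by (simp add: nth_list_update_neq)
  qed
next
  case (LR k')
  show ?thesis
  proof (cases "k' = k \<or> k' = Suc k")
    case True
    then show ?thesis
    proof
      assume "k' = k" then show ?thesis using LR d k rung_upd_k[OF k, of x] by simp
    next
      assume "k' = Suc k" then show ?thesis using LR d k rung_upd_Sk[OF k, of x] by simp
    qed
  next
    case False then show ?thesis using LR d rung_upd_same[of k' k w x] by simp
  qed
qed

fun owner :: "letter list \<Rightarrow> ed \<Rightarrow> nat \<times> nat" where
  "owner w (Sd k s e) = (case w!k of
      AA \<Rightarrow> if e = ELA then (k,2) else (k, if s then 0 else 1)
    | BB \<Rightarrow> if e = EBR then (k,2) else (k, if s then 0 else 1)
    | AB \<Rightarrow> (k, if s then 0 else 1)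
    | BA \<Rightarrow> (k, if s then 0 else 1)
    | LL \<Rightarrow> if e = EAM then (k,0) else (k-1, 2)
    | RR \<Rightarrow> if e = EMB then (k,0) else (Suc k, 2))"
| "owner w (MR k) = (k,2)"
| "owner w (LR k) = (if k < length w \<and> w!k = LL then (k,0) else (k-1,0))"

definition cw :: "letter list \<Rightarrow> nat \<times> nat \<Rightarrow> letter list" where
  "cw w i = (case i of (k,j) \<Rightarrow> (case w!k of
     AA \<Rightarrow> if j = 0 then w[k:=BA] else if j = 1 then w[k:=AB]
           else if 0 < k \<and> w!(k-1) = RR then (w[k-1:=AA])[k:=LL] else w[k:=LL]
   | BB \<Rightarrow> if j = 0 then w[k:=AB] else if j = 1 then w[k:=BA]
           else if Suc k < length w \<and> w!Suc k = LL then (w[Suc k:=BB])[k:=RR] else w[k:=RR]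
   | AB \<Rightarrow> if j = 0 then w[k:=BB] else w[k:=AA]
   | BA \<Rightarrow> if j = 0 then w[k:=AA] else w[k:=BB]
   | LL \<Rightarrow> w[k:=AA]
   | RR \<Rightarrow> w[k:=BB]))"

lemma valid_upd_int:
  assumes "valid w" "x \<noteq> LL" "x \<noteq> RR"
  shows "valid (w[k:=x])"
  unfolding valid_def
proof (intro allI impI)
  fix i assume i: "Suc i < length (w[k:=x])"
  have vi: "\<not> (w!i = RR \<and> w!Suc i = LL)" using assms(1) i unfolding valid_def by simp
  show "\<not> (w[k:=x]!i = RR \<and> w[k:=x]!Suc i = LL)"
    using vi i assms(2,3) by (cases "i = k"; cases "Suc i = k"; simp add: nth_list_update)
qed

lemma valid_upd_LL:
  assumes "valid w" "\<not> (0 < k \<and> w!(k-1) = RR)"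
  shows "valid (w[k:=LL])"
  unfolding valid_def
proof (intro allI impI)
  fix i assume i: "Suc i < length (w[k:=LL])"
  have vi: "\<not> (w!i = RR \<and> w!Suc i = LL)" using assms(1) i unfolding valid_def by simp
  show "\<not> (w[k:=LL]!i = RR \<and> w[k:=LL]!Suc i = LL)"
  proof (cases "Suc i = k")
    case True then show ?thesis using assms(2) i by auto
  next
    case False then show ?thesis using vi i by (cases "i = k"; simp add: nth_list_update)
  qed
qed

lemma valid_upd_RR:
  assumes "valid w" "\<not> (Suc k < length w \<and> w!Suc k = LL)"
  shows "valid (w[k:=RR])"
  unfolding valid_def
proof (intro allI impI)
  fix i assume i: "Suc i < length (w[k:=RR])"
  have vi: "\<not> (w!i = RR \<and> w!Suc i = LL)" using assms(1) i unfolding valid_def by simp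
  show "\<not> (w[k:=RR]!i = RR \<and> w[k:=RR]!Suc i = LL)"
  proof (cases "i = k")
    case True then show ?thesis using assms(2) i by auto
  next
    case False then show ?thesis using vi i by (cases "Suc i = k"; simp add: nth_list_update)
  qed
qed

lemma cw_W:
  assumes w: "w \<in> W n" and k: "k < n"
  shows "cw w (k,j) \<in> W n"
proof -
  have len: "length w = n" and v: "valid w" using w by (auto simp: W_def)
  have vv: "valid (cw w (k,j))"
  proof (cases "w!k")
    case AA
    show ?thesis
    proof (cases "j \<le> 1")
      case True then show ?thesis using AA v by (auto simp: cw_def intro: valid_upd_int)
    next
      case False
      show ?thesis
      proof (cases "0 < k \<and> w!(k-1) = RR")
        case True
        have "valid (w[k-1:=AA])" using v by (rule valid_upd_int) auto
        moreover have "\<not> (0 < k \<and> w[k-1:=AA]!(k-1) = RR)" using True k len by simp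
        ultimately have "valid ((w[k-1:=AA])[k:=LL])" by (rule valid_upd_LL)
        then show ?thesis using AA False True by (simp add: cw_def)
      next
        case F2: False
        then have "valid (w[k:=LL])" using v by (intro valid_upd_LL) auto
        then show ?thesis using AA False F2 by (auto simp: cw_def)
      qed
    qed
  next
    case BB
    show ?thesis
    proof (cases "j \<le> 1")
      case True then show ?thesis using BB v by (auto simp: cw_def intro: valid_upd_int)
    next
      case False
      show ?thesis
      proof (cases "Suc k < length w \<and> w!Suc k = LL")
        case True
        have "valid (w[Suc k:=BB])" using v by (rule valid_upd_int) auto
        moreover have "\<not> (Suc k < length (w[Suc k:=BB]) \<and> w[Suc k:=BB]!Suc k = LL)" using True by simp
        ultimately have "valid ((w[Suc k:=BB])[k:=RR])" by (rule valid_upd_RR)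
        then show ?thesis using BB False True by (simp add: cw_def)
      next
        case F2: False
        then have "valid (w[k:=RR])" using v by (intro valid_upd_RR) auto
        then show ?thesis using BB False F2 by (auto simp: cw_def)
      qed
    qed
  next
    case AB then show ?thesis using v by (auto simp: cw_def intro: valid_upd_int)
  next
    case BA then show ?thesis using v by (auto simp: cw_def intro: valid_upd_int)
  next
    case LL then show ?thesis using v by (auto simp: cw_def intro: valid_upd_int)
  next
    case RR then show ?thesis using v by (auto simp: cw_def intro: valid_upd_int)
  qed
  have "length (cw w (k,j)) = n" using len by (cases "w!k") (auto simp: cw_def)
  then show ?thesis using vv by (simp add: W_def)
qed

lemma cw_ne:
  assumes w: "w \<in> W n" and k: "k < n"
  shows "cw w (k,j) \<noteq> w"
proof -
  have len: "length w = n" using w by (simp add: W_def)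
  have "cw w (k,j) ! k \<noteq> w!k" using k len by (cases "w!k") (auto simp: cw_def nth_list_update)
  then show ?thesis by auto
qed




lemma cert_owner:
  assumes w: "w \<in> W n" and k: "k < n" and j: "j < c (w!k)"
    and d1: "inM (cw w (k,j)) d" and d2: "\<not> inM w d"
  shows "owner w d = (k,j)"
proof -
  have len: "length w = n" and v: "valid w" using w by (auto simp: W_def)
  have kl: "k < length w" using k len by simp
  show ?thesis
  proof (cases "w!k")
    case AA
    consider "j = 0" | "j = 1" | "j = 2" using j AA by fastforce
    then show ?thesis
    proof cases
      case 1
      then have "inM (w[k:=BA]) d" using d1 AA by (simp add: cw_def)
      from diff1[OF kl this d2] show ?thesis using AA 1 by (auto simp: rung_in_def split: if_splits)
    next
      case 2
      then have "inM (w[k:=AB]) d" using d1 AA by (simp add: cw_def)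
      from diff1[OF kl this d2] show ?thesis using AA 2 by (auto simp: rung_in_def split: if_splits)
    next
      case 3
      show ?thesis
      proof (cases "0 < k \<and> w!(k-1) = RR")
        case True
        define w1 where "w1 = w[k-1:=AA]"
        have dd: "inM (w1[k:=LL]) d" using d1 AA 3 True by (simp add: cw_def w1_def)
        have k1: "k - 1 < length w" using kl by simp
        have w1k: "w1!k = AA" "w1!(k-1) = AA" "length w1 = length w" using AA True kl by (auto simp: w1_def)
        show ?thesis
        proof (cases "inM w1 d")
          case True
          have dd': "inM (w[k-1:=AA]) d" using True by (simp add: w1_def)
          have "Suc (k-1) = k" using \<open>0 < k \<and> w!(k-1) = RR\<close> by simp
          from diff1[OF k1 dd' d2] show ?thesis using AA 3 \<open>0 < k \<and> w!(k-1) = RR\<close> dd rung_upd_k[of k w1 LL] kl w1k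
            by (auto simp: rung_in_def split: if_splits)
        next
          case False
          have kl1: "k < length w1" using kl w1k by simp
          from diff1[OF kl1 dd False] show ?thesis using AA 3 w1k kl
            by (auto simp: rung_in_def w1_def split: if_splits)
        qed
      next
        case False
        then have "inM (w[k:=LL]) d" using d1 AA 3 by (auto simp: cw_def)
        from diff1[OF kl this d2] show ?thesis using AA 3 by (auto simp: rung_in_def split: if_splits)
      qed
    qed
  next
    case BB
    consider "j = 0" | "j = 1" | "j = 2" using j BB by fastforce
    then show ?thesis
    proof cases
      case 1
      then have "inM (w[k:=AB]) d" using d1 BB by (simp add: cw_def)
      from diff1[OF kl this d2] show ?thesis using BB 1 by (auto simp: rung_in_def split: if_splits)
    next
      case 2
      then have "inM (w[k:=BA]) d" using d1 BB by (simp add: cw_def)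
      from diff1[OF kl this d2] show ?thesis using BB 2 by (auto simp: rung_in_def split: if_splits)
    next
      case 3
      show ?thesis
      proof (cases "Suc k < length w \<and> w!Suc k = LL")
        case True
        define w1 where "w1 = w[Suc k:=BB]"
        have dd: "inM (w1[k:=RR]) d" using d1 BB 3 True by (simp add: cw_def w1_def)
        have k1: "Suc k < length w" using True by simp
        have w1k: "w1!k = BB" "w1!Suc k = BB" "length w1 = length w" using BB True kl by (auto simp: w1_def)
        show ?thesis
        proof (cases "inM w1 d")
          case True
          have dd': "inM (w[Suc k:=BB]) d" using True by (simp add: w1_def)
          from diff1[OF k1 dd' d2] show ?thesis using BB 3 \<open>Suc k < length w \<and> w!Suc k = LL\<close> dd rung_upd_Sk[of k w1 RR] kl w1k
            by (auto simp: rung_in_def split: if_splits)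
        next
          case False
          have kl1: "k < length w1" using kl w1k by simp
          from diff1[OF kl1 dd False] show ?thesis using BB 3 w1k kl
            by (auto simp: rung_in_def w1_def nth_list_update split: if_splits)
        qed
      next
        case False
        then have "inM (w[k:=RR]) d" using d1 BB 3 by (auto simp: cw_def)
        from diff1[OF kl this d2] show ?thesis using BB 3 by (auto simp: rung_in_def split: if_splits)
      qed
    qed
  next
    case AB
    consider "j = 0" | "j = 1" using j AB by fastforce
    then show ?thesis
    proof cases
      case 1
      then have "inM (w[k:=BB]) d" using d1 AB by (simp add: cw_def)
      from diff1[OF kl this d2] show ?thesis using AB 1 by (auto simp: rung_in_def split: if_splits)
    next
      case 2
      then have "inM (w[k:=AA]) d" using d1 AB by (simp add: cw_def)
      from diff1[OF kl this d2] show ?thesis using AB 2 by (auto simp: rung_in_def split: if_splits)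
    qed
  next
    case BA
    consider "j = 0" | "j = 1" using j BA by fastforce
    then show ?thesis
    proof cases
      case 1
      then have "inM (w[k:=AA]) d" using d1 BA by (simp add: cw_def)
      from diff1[OF kl this d2] show ?thesis using BA 1 by (auto simp: rung_in_def split: if_splits)
    next
      case 2
      then have "inM (w[k:=BB]) d" using d1 BA by (simp add: cw_def)
      from diff1[OF kl this d2] show ?thesis using BA 2 by (auto simp: rung_in_def split: if_splits)
    qed
  next
    case LL
    then have j0: "j = 0" using j by simp
    have "inM (w[k:=AA]) d" using d1 LL by (simp add: cw_def)
    from diff1[OF kl this d2] show ?thesis using LL j0 kl by (auto simp: rung_in_def split: if_splits)
  next
    case RR
    then have j0: "j = 0" using j by simp
    have "inM (w[k:=BB]) d" using d1 RR by (simp add: cw_def)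
    from diff1[OF kl this d2] show ?thesis using RR j0 kl by (auto simp: rung_in_def split: if_splits)
  qed
qed

lemma finite_pyrene_E: "finite (pyrene_E n)"
proof -
  have "finite (pyrene_hexes n)" by (simp add: hexes_eq)
  moreover have "finite (hex_edges c)" for c by (cases c) (simp add: hex_edges_def)
  ultimately show ?thesis unfolding pyrene_E_def by blast
qed

lemma lower:
  assumes w: "w \<in> W n" and S: "anti_forcing_set (GV n) (GE n) (edge_of ` Nw n w) S"
  shows "cost w \<le> card S"
proof -
  have len: "length w = n" using w by (simp add: W_def)
  have Ssub: "S \<subseteq> GE n - edge_of ` Nw n w" using S by (simp add: anti_forcing_set_def)
  have uniq: "\<And>M'. perfect_matching (GV n) (GE n - S) M' \<longleftrightarrow> M' = edge_of ` Nw n w"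
    using S unfolding anti_forcing_set_def by blast
  define SN where "SN = {d \<in> ED n. edge_of d \<in> S}"
  have S_eq: "S = edge_of ` SN" using Ssub by (auto simp: SN_def)
  have finS: "finite S" using Ssub finite_pyrene_E[of n] E_eq[of n] by (metis Diff_subset finite_subset)
  have finSN: "finite SN"
  proof -
    have "SN \<subseteq> edge_of -` S" by (auto simp: SN_def)
    moreover have "finite (edge_of -` S)" using finS inj_edge_of by (simp add: finite_vimageI)
    ultimately show ?thesis by (rule finite_subset)
  qed
  have cardS: "card S = card SN" unfolding S_eq using inj_edge_of by (simp add: card_image inj_on_def)
  define I where "I = Sigma {..<n} (\<lambda>k. {..<c (w!k)})"
  have cardI: "card I = cost w" unfolding I_def by (simp add: cost_sum len)
  have "I \<subseteq> owner w ` SN"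
  proof
    fix i assume "i \<in> I"
    then obtain k j where i: "i = (k,j)" "k < n" "j < c (w!k)" by (auto simp: I_def)
    define w' where "w' = cw w (k,j)"
    have w': "w' \<in> W n" "w' \<noteq> w" using cw_W[OF w i(2)] cw_ne[OF w i(2)] by (simp_all add: w'_def)
    have pm': "perfect_matching (GV n) (GE n) (edge_of ` Nw n w')"
    proof -
      have "\<exists>v\<in>W n. edge_of ` Nw n w' = edge_of ` Nw n v" using w' by blast
      then show ?thesis by (simp only: PM_G)
    qed
    have ne: "edge_of ` Nw n w' \<noteq> edge_of ` Nw n w"
    proof
      assume "edge_of ` Nw n w' = edge_of ` Nw n w"
      then have "Nw n w' = Nw n w" using inj_edge_of by (simp add: inj_image_eq_iff)
      then have "w' = w" using Nw_inj[of n] w'(1) w by (simp add: inj_on_def)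
      then show False using w'(2) by simp
    qed
    have "\<not> perfect_matching (GV n) (GE n - S) (edge_of ` Nw n w')" using uniq ne by simp
    then have "edge_of ` Nw n w' \<inter> S \<noteq> {}" using pm' by (simp add: pm_minus)
    then obtain d where d: "d \<in> Nw n w'" "edge_of d \<in> S" by auto
    have dED: "d \<in> ED n" using d(1) by (simp add: Nw_mem)
    have dSN: "d \<in> SN" using d dED by (simp add: SN_def)
    have "d \<notin> Nw n w"
    proof
      assume "d \<in> Nw n w" then have "edge_of d \<in> edge_of ` Nw n w" by simp
      then show False using Ssub d(2) by blast
    qed
    then have nin: "\<not> inM w d" using dED by (simp add: Nw_mem)
    have inn: "inM (cw w (k,j)) d" using d(1) by (simp add: Nw_mem w'_def)
    have "owner w d = (k,j)" by (rule cert_owner[OF w i(2) i(3) inn nin])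
    then show "i \<in> owner w ` SN" using dSN i(1) by (metis image_eqI)
  qed
  then have "card I \<le> card (owner w ` SN)" using finSN by (simp add: card_mono)
  also have "\<dots> \<le> card SN" using finSN by (rule card_image_le)
  finally show ?thesis using cardI cardS by simp
qed

lemma af_eq:
  assumes w: "w \<in> W n"
  shows "anti_forcing_number (GV n) (GE n) (edge_of ` Nw n w) = cost w"
  unfolding anti_forcing_number_def
proof (rule Least_equality)
  have "card (edge_of ` Sw w) = cost w"
    using card_Sw[OF w] inj_edge_of by (simp add: card_image inj_on_def)
  then show "\<exists>S. anti_forcing_set (GV n) (GE n) (edge_of ` Nw n w) S \<and> card S = cost w"
    using upper_afs[OF w] by blast
next
  fix y assume "\<exists>S. anti_forcing_set (GV n) (GE n) (edge_of ` Nw n w) S \<and> card S = y"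
  then obtain S where "anti_forcing_set (GV n) (GE n) (edge_of ` Nw n w) S" "card S = y" by blast
  then show "cost w \<le> y" using lower[OF w] by blast
qed

lemma sum_af:
  "(\<Sum>M\<in>{M. perfect_matching (pyrene_V n) (pyrene_E n) M}. anti_forcing_number (pyrene_V n) (pyrene_E n) M)
   = (\<Sum>w\<in>W n. cost w)"
proof -
  have "(\<Sum>M\<in>{M. perfect_matching (pyrene_V n) (pyrene_E n) M}. anti_forcing_number (pyrene_V n) (pyrene_E n) M)
      = (\<Sum>M\<in>(\<lambda>w. edge_of ` Nw n w) ` W n. anti_forcing_number (GV n) (GE n) M)"
    by (subst PM_set) (simp only: V_eq E_eq)
  also have "\<dots> = (\<Sum>w\<in>W n. anti_forcing_number (GV n) (GE n) (edge_of ` Nw n w))"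
    by (rule sum.reindex[OF PM_inj, unfolded comp_def])
  also have "\<dots> = (\<Sum>w\<in>W n. cost w)" by (rule sum.cong) (simp_all add: af_eq)
  finally show ?thesis .
qed




definition ok :: "letter \<Rightarrow> letter list \<Rightarrow> bool" where
  "ok x w \<longleftrightarrow> \<not> (x = RR \<and> w \<noteq> [] \<and> hd w = LL)"

lemma valid_Nil: "valid []" by (simp add: valid_def)

lemma valid_Cons: "valid (x # w) \<longleftrightarrow> valid w \<and> ok x w"
proof
  assume v: "valid (x # w)"
  have "valid w" unfolding valid_def
  proof (intro allI impI)
    fix k assume "Suc k < length w"
    then have "Suc (Suc k) < length (x#w)" by simp
    then show "\<not> (w!k = RR \<and> w!Suc k = LL)" using v unfolding valid_def by (metis nth_Cons_Suc)
  qed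
  moreover have "ok x w"
  proof (cases w)
    case (Cons y ys)
    have "Suc 0 < length (x#w)" using Cons by simp
    then have "\<not> ((x#w)!0 = RR \<and> (x#w)!Suc 0 = LL)" using v unfolding valid_def by blast
    then show ?thesis using Cons by (simp add: ok_def)
  qed (simp add: ok_def)
  ultimately show "valid w \<and> ok x w" ..
next
  assume a: "valid w \<and> ok x w"
  show "valid (x # w)" unfolding valid_def
  proof (intro allI impI)
    fix k assume k: "Suc k < length (x#w)"
    show "\<not> ((x#w)!k = RR \<and> (x#w)!Suc k = LL)"
    proof (cases k)
      case 0
      then show ?thesis using a k by (cases w) (auto simp: ok_def)
    next
      case (Suc k')
      then have "Suc k' < length w" using k by simp
      then show ?thesis using a Suc unfolding valid_def by simp
    qed
  qed
qed

definition Lset :: "letter set" where "Lset = {AA, AB, BA, BB, LL, RR}"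

lemma in_Lset: "x \<in> Lset" by (cases x) (auto simp: Lset_def)

lemma finite_W: "finite (W n)"
proof -
  have "W n \<subseteq> {xs. set xs \<subseteq> Lset \<and> length xs = n}" using in_Lset by (auto simp: W_def)
  moreover have "finite {xs. set xs \<subseteq> Lset \<and> length xs = n}"
    by (rule finite_lists_length_eq) (simp add: Lset_def)
  ultimately show ?thesis by (rule finite_subset)
qed

lemma W_0: "W 0 = {[]}" by (auto simp: W_def valid_Nil)

lemma W_Suc: "W (Suc n) = (\<Union>x\<in>Lset. (Cons x) ` {w \<in> W n. ok x w})"
proof (rule set_eqI, rule iffI)
  fix v assume "v \<in> W (Suc n)"
  then obtain x w where v: "v = x # w" "length w = n" "valid (x#w)" by (cases v) (auto simp: W_def)
  then have "w \<in> W n" "ok x w" by (auto simp: W_def valid_Cons)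
  then show "v \<in> (\<Union>x\<in>Lset. (Cons x) ` {w \<in> W n. ok x w})" using v in_Lset by blast
next
  fix v assume "v \<in> (\<Union>x\<in>Lset. (Cons x) ` {w \<in> W n. ok x w})"
  then obtain x w where "v = x # w" "w \<in> W n" "ok x w" by blast
  then show "v \<in> W (Suc n)" by (simp add: W_def valid_Cons)
qed

lemma sum_W_Suc:
  fixes f :: "letter list \<Rightarrow> real"
  shows "(\<Sum>v\<in>W (Suc n). f v) = (\<Sum>x\<in>Lset. \<Sum>w\<in>{w \<in> W n. ok x w}. f (x # w))"
proof -
  have "(\<Sum>v\<in>W (Suc n). f v) = (\<Sum>x\<in>Lset. \<Sum>v\<in>(Cons x) ` {w \<in> W n. ok x w}. f v)"
    unfolding W_Suc
  proof (rule sum.UNION_disjoint)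
    show "finite Lset" by (simp add: Lset_def)
    show "\<forall>x\<in>Lset. finite (Cons x ` {w \<in> W n. ok x w})" using finite_W by auto
    show "\<forall>x\<in>Lset. \<forall>y\<in>Lset. x \<noteq> y \<longrightarrow> Cons x ` {w \<in> W n. ok x w} \<inter> Cons y ` {w \<in> W n. ok y w} = {}"
      by auto
  qed
  also have "\<dots> = (\<Sum>x\<in>Lset. \<Sum>w\<in>{w \<in> W n. ok x w}. f (x # w))"
    by (rule sum.cong) (simp_all add: sum.reindex)
  finally show ?thesis .
qed

definition WL :: "nat \<Rightarrow> letter list set" where
  "WL n = {w \<in> W n. w \<noteq> [] \<and> hd w = LL}"

lemma WL_sub: "WL n \<subseteq> W n" by (auto simp: WL_def)

lemma ok_set: "{w \<in> W n. ok x w} = (if x = RR then W n - WL n else W n)"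
  by (auto simp: ok_def WL_def)

lemma WL_0: "WL 0 = {}" by (simp add: WL_def W_0)

lemma WL_Suc: "WL (Suc n) = (Cons LL) ` W n"
proof -
  have "WL (Suc n) = {v \<in> W (Suc n). v \<noteq> [] \<and> hd v = LL}" by (simp add: WL_def)
  also have "\<dots> = (Cons LL) ` W n"
  proof (rule set_eqI, rule iffI)
    fix v assume "v \<in> {v \<in> W (Suc n). v \<noteq> [] \<and> hd v = LL}"
    then obtain w where "v = LL # w" "w \<in> W n" by (cases v) (auto simp: W_def valid_Cons)
    then show "v \<in> (Cons LL) ` W n" by blast
  next
    fix v assume "v \<in> (Cons LL) ` W n"
    then obtain w where "v = LL # w" "w \<in> W n" by blast
    then show "v \<in> {v \<in> W (Suc n). v \<noteq> [] \<and> hd v = LL}" by (simp add: W_def valid_Cons ok_def)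
  qed
  finally show ?thesis .
qed

lemma sum_ok:
  fixes f :: "letter list \<Rightarrow> real"
  shows "(\<Sum>w\<in>{w \<in> W n. ok x w}. f w) = (\<Sum>w\<in>W n. f w) - (if x = RR then (\<Sum>w\<in>WL n. f w) else 0)"
  using finite_W[of n] WL_sub[of n] by (simp add: ok_set sum_diff)

lemma sum_Lset: "(\<Sum>x\<in>Lset. g x) = g AA + g AB + g BA + g BB + g LL + (g RR :: real)"
  by (simp add: Lset_def)

definition "cntA n = (\<Sum>w\<in>W n. (1::real))"
definition "cntAL n = (\<Sum>w\<in>WL n. (1::real))"
definition "sumB n = (\<Sum>w\<in>W n. real (cost w))"
definition "sumBL n = (\<Sum>w\<in>WL n. real (cost w))"

lemma cost_Cons: "cost (x # w) = c x + cost w" by (simp add: cost_def)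

lemma cntA_Suc: "cntA (Suc n) = 6 * cntA n - cntAL n"
  unfolding cntA_def cntAL_def sum_W_Suc sum_ok sum_Lset by simp

lemma cntAL_Suc: "cntAL (Suc n) = cntA n"
  unfolding cntA_def cntAL_def WL_Suc by (simp add: card_image inj_on_def)

lemma sumB_Suc: "sumB (Suc n) = 12 * cntA n - cntAL n + 6 * sumB n - sumBL n"
proof -
  have "sumB (Suc n) = (\<Sum>x\<in>Lset. \<Sum>w\<in>{w \<in> W n. ok x w}. real (c x) + real (cost w))"
    unfolding sumB_def sum_W_Suc cost_Cons by simp
  also have "\<dots> = 12 * cntA n - cntAL n + 6 * sumB n - sumBL n"
    unfolding sum.distrib sum_ok sum_Lset cntA_def cntAL_def sumB_def sumBL_def by simp
  finally show ?thesis .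
qed

lemma sumBL_Suc: "sumBL (Suc n) = cntA n + sumB n"
  unfolding cntA_def sumB_def sumBL_def WL_Suc by (simp add: sum.reindex cost_Cons sum.distrib)

lemma cntA_0: "cntA 0 = 1" by (simp add: cntA_def W_0)
lemma cntAL_0: "cntAL 0 = 0" by (simp add: cntAL_def WL_0)
lemma sumB_0: "sumB 0 = 0" by (simp add: sumB_def W_0 cost_def)
lemma sumBL_0: "sumBL 0 = 0" by (simp add: sumBL_def WL_0)




definition cntAf :: "nat \<Rightarrow> real" where
  "cntAf n = ((3 + 2 * sqrt 2) ^ Suc n - (3 - 2 * sqrt 2) ^ Suc n) * sqrt 2 / 8"
definition cntALf :: "nat \<Rightarrow> real" where
  "cntALf n = ((3 + 2 * sqrt 2) ^ n - (3 - 2 * sqrt 2) ^ n) * sqrt 2 / 8"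
definition sumBf :: "nat \<Rightarrow> real" where
  "sumBf n = 3 * sqrt 2 / 64 * (3 - 2 * sqrt 2) ^ n
         + (17 - 12 * sqrt 2) / 16 * real n * (3 - 2 * sqrt 2) ^ n
         - 3 * sqrt 2 / 64 * (3 + 2 * sqrt 2) ^ n
         + (17 + 12 * sqrt 2) / 16 * real n * (3 + 2 * sqrt 2) ^ n"
definition sumBLf :: "nat \<Rightarrow> real" where
  "sumBLf n = ((3 + 2 * sqrt 2) ^ n - (3 - 2 * sqrt 2) ^ n) * sqrt 2 / 8
     + 3 * sqrt 2 / 64 * (3 + 2 * sqrt 2) * (3 - 2 * sqrt 2) ^ n
     + (17 - 12 * sqrt 2) / 16 * (real n - 1) * (3 + 2 * sqrt 2) * (3 - 2 * sqrt 2) ^ n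
     - 3 * sqrt 2 / 64 * (3 - 2 * sqrt 2) * (3 + 2 * sqrt 2) ^ n
     + (17 + 12 * sqrt 2) / 16 * (real n - 1) * (3 - 2 * sqrt 2) * (3 + 2 * sqrt 2) ^ n"

lemma alg:
  fixes X Y m s :: real
  assumes ss: "s * s = 2"
  shows "((3 + 2*s) * ((3 + 2*s) * X) - (3 - 2*s) * ((3 - 2*s) * Y)) * s / 8
           = 6 * (((3 + 2*s) * X - (3 - 2*s) * Y) * s / 8) - (X - Y) * s / 8"
    and "((3 + 2*s) * X - (3 - 2*s) * Y) * s / 8 = ((3 + 2*s) * X - (3 - 2*s) * Y) * s / 8"
    and "3 * s / 64 * ((3 - 2*s) * Y) + (17 - 12*s) / 16 * (1 + m) * ((3 - 2*s) * Y)
         - 3 * s / 64 * ((3 + 2*s) * X) + (17 + 12*s) / 16 * (1 + m) * ((3 + 2*s) * X)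
       = 12 * (((3 + 2*s) * X - (3 - 2*s) * Y) * s / 8) - (X - Y) * s / 8
         + 6 * (3 * s / 64 * Y + (17 - 12*s) / 16 * m * Y - 3 * s / 64 * X + (17 + 12*s) / 16 * m * X)
         - ((X - Y) * s / 8 + 3 * s / 64 * (3 + 2*s) * Y + (17 - 12*s) / 16 * (m - 1) * (3 + 2*s) * Y
            - 3 * s / 64 * (3 - 2*s) * X + (17 + 12*s) / 16 * (m - 1) * (3 - 2*s) * X)"
    and "((3 + 2*s) * X - (3 - 2*s) * Y) * s / 8
         + 3 * s / 64 * (3 + 2*s) * ((3 - 2*s) * Y) + (17 - 12*s) / 16 * (1 + m - 1) * (3 + 2*s) * ((3 - 2*s) * Y)
         - 3 * s / 64 * (3 - 2*s) * ((3 + 2*s) * X) + (17 + 12*s) / 16 * (1 + m - 1) * (3 - 2*s) * ((3 + 2*s) * X)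
       = ((3 + 2*s) * X - (3 - 2*s) * Y) * s / 8
         + (3 * s / 64 * Y + (17 - 12*s) / 16 * m * Y - 3 * s / 64 * X + (17 + 12*s) / 16 * m * X)"
proof -
  have e: "\<And>z. s * (s * z) = 2 * z" using ss by (metis mult.assoc)
  show "((3 + 2*s) * ((3 + 2*s) * X) - (3 - 2*s) * ((3 - 2*s) * Y)) * s / 8
           = 6 * (((3 + 2*s) * X - (3 - 2*s) * Y) * s / 8) - (X - Y) * s / 8"
    by (simp add: algebra_simps e ss; (simp add: field_simps)?; (simp add: algebra_simps e ss)?)
  show "((3 + 2*s) * X - (3 - 2*s) * Y) * s / 8 = ((3 + 2*s) * X - (3 - 2*s) * Y) * s / 8" ..
  show "3 * s / 64 * ((3 - 2*s) * Y) + (17 - 12*s) / 16 * (1 + m) * ((3 - 2*s) * Y)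
         - 3 * s / 64 * ((3 + 2*s) * X) + (17 + 12*s) / 16 * (1 + m) * ((3 + 2*s) * X)
       = 12 * (((3 + 2*s) * X - (3 - 2*s) * Y) * s / 8) - (X - Y) * s / 8
         + 6 * (3 * s / 64 * Y + (17 - 12*s) / 16 * m * Y - 3 * s / 64 * X + (17 + 12*s) / 16 * m * X)
         - ((X - Y) * s / 8 + 3 * s / 64 * (3 + 2*s) * Y + (17 - 12*s) / 16 * (m - 1) * (3 + 2*s) * Y
            - 3 * s / 64 * (3 - 2*s) * X + (17 + 12*s) / 16 * (m - 1) * (3 - 2*s) * X)"
    by (simp add: algebra_simps e ss; (simp add: field_simps)?; (simp add: algebra_simps e ss)?)
  show "((3 + 2*s) * X - (3 - 2*s) * Y) * s / 8
         + 3 * s / 64 * (3 + 2*s) * ((3 - 2*s) * Y) + (17 - 12*s) / 16 * (1 + m - 1) * (3 + 2*s) * ((3 - 2*s) * Y)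
         - 3 * s / 64 * (3 - 2*s) * ((3 + 2*s) * X) + (17 + 12*s) / 16 * (1 + m - 1) * (3 - 2*s) * ((3 + 2*s) * X)
       = ((3 + 2*s) * X - (3 - 2*s) * Y) * s / 8
         + (3 * s / 64 * Y + (17 - 12*s) / 16 * m * Y - 3 * s / 64 * X + (17 + 12*s) / 16 * m * X)"
    by (simp add: algebra_simps e ss; (simp add: field_simps)?; (simp add: algebra_simps e ss)?)
qed

lemma closed: "cntA n = cntAf n \<and> cntAL n = cntALf n \<and> sumB n = sumBf n \<and> sumBL n = sumBLf n"
proof (induction n)
  case 0
  have ss: "sqrt 2 * sqrt 2 = (2::real)" by simp
  have e: "\<And>z. sqrt 2 * (sqrt 2 * z) = 2 * (z::real)" by (metis ss mult.assoc)
  show ?case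
    by (simp add: cntA_0 cntAL_0 sumB_0 sumBL_0 cntAf_def cntALf_def sumBf_def sumBLf_def algebra_simps e; (simp add: field_simps)?; (simp add: algebra_simps e)?)
next
  case (Suc n)
  define X where "X = (3 + 2 * sqrt 2 :: real) ^ n"
  define Y where "Y = (3 - 2 * sqrt 2 :: real) ^ n"
  have ss: "sqrt 2 * sqrt 2 = (2::real)" by simp
  note al1 = alg(1)[OF ss, where X=X and Y=Y]
  note al3 = alg(3)[OF ss, where X=X and Y=Y and m="real n"]
  note al4 = alg(4)[OF ss, where X=X and Y=Y and m="real n"]
  have IH: "cntA n = cntAf n" "cntAL n = cntALf n" "sumB n = sumBf n" "sumBL n = sumBLf n" using Suc.IH by auto
  have fa: "(3 + 2 * sqrt 2) ^ n = X" "(3 - 2 * sqrt 2) ^ n = Y" by (simp_all add: X_def Y_def)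
  have "cntA (Suc n) = 6 * cntAf n - cntALf n" by (simp add: cntA_Suc IH)
  also have "\<dots> = cntAf (Suc n)" unfolding cntAf_def cntALf_def power_Suc fa by (rule al1[symmetric])
  finally have 1: "cntA (Suc n) = cntAf (Suc n)" .
  have 2: "cntAL (Suc n) = cntALf (Suc n)" by (simp add: cntAL_Suc IH cntAf_def cntALf_def)
  have "sumB (Suc n) = 12 * cntAf n - cntALf n + 6 * sumBf n - sumBLf n" by (simp add: sumB_Suc IH)
  also have "\<dots> = sumBf (Suc n)" unfolding cntAf_def cntALf_def sumBf_def sumBLf_def power_Suc fa of_nat_Suc
    by (rule al3[symmetric])
  finally have 3: "sumB (Suc n) = sumBf (Suc n)" .
  have "sumBL (Suc n) = cntAf n + sumBf n" by (simp add: sumBL_Suc IH)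
  also have "\<dots> = sumBLf (Suc n)" unfolding cntAf_def sumBf_def sumBLf_def power_Suc fa of_nat_Suc
    by (rule al4[symmetric])
  finally have 4: "sumBL (Suc n) = sumBLf (Suc n)" .
  show ?case using 1 2 3 4 by blast
qed

theorem theorem4p4:
  fixes n :: nat
  shows "real (\<Sum>M\<in>{M. perfect_matching (pyrene_V n) (pyrene_E n) M}.
                 anti_forcing_number (pyrene_V n) (pyrene_E n) M)
       = 3 * sqrt 2 / 64 * (3 - 2 * sqrt 2) ^ n
         + (17 - 12 * sqrt 2) / 16 * real n * (3 - 2 * sqrt 2) ^ n
         - 3 * sqrt 2 / 64 * (3 + 2 * sqrt 2) ^ n
         + (17 + 12 * sqrt 2) / 16 * real n * (3 + 2 * sqrt 2) ^ n"
proof -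
  have "real (\<Sum>M\<in>{M. perfect_matching (pyrene_V n) (pyrene_E n) M}.
                 anti_forcing_number (pyrene_V n) (pyrene_E n) M) = sumB n"
    unfolding sum_af sumB_def by simp
  also have "\<dots> = sumBf n" using closed by blast
  finally show ?thesis unfolding sumBf_def .
qed


end
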